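(* Let $\mathbb{C}$ be a category with pullbacks, $\mathrm{I}$ a set, and $\mathscr{U}=(U,(U_i,\iota_i)_{i\in\mathrm{I}})$ a sink in $\mathbb{C}$. Let $\mathbf{G}:\mathbb{S}_2(\mathrm{I})^{op}\to\mathbb{C}$ be a functor with $\mathbf{G}(i)=U_i$ for all $i\in\mathrm{I}$, and suppose $\mathbf{G}$ has a colimit cocone $(U,(\lambda_x)_{x\in\mathbb{S}_2(\mathrm{I})})$ with $\lambda_i=\iota_i$ for all $i\in\mathrm{I}$. Then $(U,(\mu_x)_{x})$, where $\mu_i:=\iota_i$ and $\mu_{(i,j)}:=\iota_i\circ\mathrm{pr}_1:U_i\times_UU_j\to U$, is a colimit cocone of the canonical functor $\mathbf{D}_{\mathscr{U}}:\mathbb{S}_2(\mathrm{I})^{op}\to\mathbb{C}$ associated with $\mathscr{U}$.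
   Context: A sink to $U$ in $\mathbb{C}$ is a family of morphisms $\iota_i:U_i\to U$, $i\in\mathrm{I}$. For a set $\mathrm{I}$, $\mathbb{S}_2(\mathrm{I})$ (the split truncated power set category of order 2) is the category whose objects are the elements $i\in\mathrm{I}$ and the ordered pairs $(i,j)\in\mathrm{I}^2$, generated by morphisms $\mathfrak{i}^s_{i,j}:i\to(i,j)$ for all $i,j\in\mathrm{I}$ (including $i=j$) and isomorphisms $\tau_{i,j}:(i,j)\to(j,i)$ with $\tau_{i,j}^{-1}=\tau_{j,i}$ (with $\tau_{i,i}$ a non-identity involution), with no further relations; thus the non-identity morphisms are the $\tau_{i,j}$, the $\mathfrak{i}^s_{i,j}$, and the composites $\tau_{i,j}\circ\mathfrak{i}^s_{i,j}:i\to(j,i)$. For a functor $\mathbf{G}:\mathbb{S}_2(\mathrm{I})^{op}\to\mathbb{C}$, a cocone with apex $L$ is a family $\lambda_x:\mathbf{G}(x)\to L$ with $\lambda_x\circ\mathbf{G}(f)=\lambda_y$ for every $f:x\to y$ in $\mathbb{S}_2(\mathrm{I})$. The canonical functor $\mathbf{D}_{\mathscr{U}}:\mathbb{S}_2(\mathrm{I})^{op}\to\mathbb{C}$ is given by $\mathbf{D}_{\mathscr{U}}(i)=U_i$, $\mathbf{D}_{\mathscr{U}}((i,j))=U_i\times_UU_j$ (pullback of $\iota_i,\iota_j$), $\mathbf{D}_{\mathscr{U}}(\mathfrak{i}^s_{i,j})=\mathrm{pr}_1:U_i\times_UU_j\to U_i$, and $\mathbf{D}_{\mathscr{U}}(\tau_{i,j}):U_j\times_UU_i\to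 U_i\times_UU_j$ the canonical swap isomorphism. *)

theory Defs
  imports Main
begin

record ('o, 'a) cat =
  Obj :: "'o set"
  Arr :: "'a set"
  Dom :: "'a \<Rightarrow> 'o"
  Cod :: "'a \<Rightarrow> 'o"
  Comp :: "'a \<Rightarrow> 'a \<Rightarrow> 'a"   (* Comp C g f = g \<circ> f *)
  Ident :: "'o \<Rightarrow> 'a"

definition hom :: "('o, 'a) cat \<Rightarrow> 'o \<Rightarrow> 'o \<Rightarrow> 'a set" where
  "hom C x y = {f \<in> Arr C. Dom C f = x \<and> Cod C f = y}"

definition category :: "('o, 'a) cat \<Rightarrow> bool" where
  "category C \<longleftrightarrow>
     (\<forall>f\<in>Arr C. Dom C f \<in> Obj C \<and> Cod C f \<in> Obj C) \<and>
     (\<forall>x\<in>Obj C. Ident C x \<in> hom C x x) \<and>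
     (\<forall>f\<in>Arr C. \<forall>g\<in>Arr C. Cod C f = Dom C g \<longrightarrow> Comp C g f \<in> hom C (Dom C f) (Cod C g)) \<and>
     (\<forall>f\<in>Arr C. Comp C (Ident C (Cod C f)) f = f \<and> Comp C f (Ident C (Dom C f)) = f) \<and>
     (\<forall>f\<in>Arr C. \<forall>g\<in>Arr C. \<forall>h\<in>Arr C. Cod C f = Dom C g \<longrightarrow> Cod C g = Dom C h \<longrightarrow>
         Comp C h (Comp C g f) = Comp C (Comp C h g) f)"

definition op_cat :: "('o, 'a) cat \<Rightarrow> ('o, 'a) cat" where
  "op_cat C = C\<lparr>Dom := Cod C, Cod := Dom C, Comp := (\<lambda>g f. Comp C f g)\<rparr>"

definition is_pullback :: "('o, 'a) cat \<Rightarrow> 'a \<Rightarrow> 'a \<Rightarrow> 'o \<Rightarrow> 'a \<Rightarrow> 'a \<Rightarrow> bool" where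
  "is_pullback C f g P p q \<longleftrightarrow>
     f \<in> Arr C \<and> g \<in> Arr C \<and> Cod C f = Cod C g \<and> P \<in> Obj C \<and>
     p \<in> hom C P (Dom C f) \<and> q \<in> hom C P (Dom C g) \<and>
     Comp C f p = Comp C g q \<and>
     (\<forall>Q a b. a \<in> hom C Q (Dom C f) \<and> b \<in> hom C Q (Dom C g) \<and> Comp C f a = Comp C g b \<longrightarrow>
        (\<exists>!h. h \<in> hom C Q P \<and> Comp C p h = a \<and> Comp C q h = b))"

definition has_pullbacks :: "('o, 'a) cat \<Rightarrow> bool" where
  "has_pullbacks C \<longleftrightarrow>
     (\<forall>f\<in>Arr C. \<forall>g\<in>Arr C. Cod C f = Cod C g \<longrightarrow> (\<exists>P p q. is_pullback C f g P p q))"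

definition is_functor :: "('p, 'b) cat \<Rightarrow> ('o, 'a) cat \<Rightarrow> ('p \<Rightarrow> 'o) \<Rightarrow> ('b \<Rightarrow> 'a) \<Rightarrow> bool" where
  "is_functor J C Fo Fa \<longleftrightarrow>
     (\<forall>x\<in>Obj J. Fo x \<in> Obj C) \<and>
     (\<forall>f\<in>Arr J. Fa f \<in> hom C (Fo (Dom J f)) (Fo (Cod J f))) \<and>
     (\<forall>x\<in>Obj J. Fa (Ident J x) = Ident C (Fo x)) \<and>
     (\<forall>f\<in>Arr J. \<forall>g\<in>Arr J. Cod J f = Dom J g \<longrightarrow> Fa (Comp J g f) = Comp C (Fa g) (Fa f))"

definition is_cocone :: "('p, 'b) cat \<Rightarrow> ('o, 'a) cat \<Rightarrow> ('p \<Rightarrow> 'o) \<Rightarrow> ('b \<Rightarrow> 'a) \<Rightarrow> 'o \<Rightarrow> ('p \<Rightarrow> 'a) \<Rightarrow> bool" where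
  "is_cocone J C Fo Fa L lam \<longleftrightarrow>
     L \<in> Obj C \<and>
     (\<forall>x\<in>Obj J. lam x \<in> hom C (Fo x) L) \<and>
     (\<forall>f\<in>Arr J. Comp C (lam (Cod J f)) (Fa f) = lam (Dom J f))"

definition is_colimit_cocone :: "('p, 'b) cat \<Rightarrow> ('o, 'a) cat \<Rightarrow> ('p \<Rightarrow> 'o) \<Rightarrow> ('b \<Rightarrow> 'a) \<Rightarrow> 'o \<Rightarrow> ('p \<Rightarrow> 'a) \<Rightarrow> bool" where
  "is_colimit_cocone J C Fo Fa L lam \<longleftrightarrow>
     is_cocone J C Fo Fa L lam \<and>
     (\<forall>L' mu. is_cocone J C Fo Fa L' mu \<longrightarrow>
        (\<exists>!u. u \<in> hom C L L' \<and> (\<forall>x\<in>Obj J. Comp C u (lam x) = mu x)))"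

datatype 'i s2obj = Sing 'i | Pr 'i 'i

text \<open>Arrows: identities, \<open>SIncl i j = i^s_{i,j} : i \<rightarrow> (i,j)\<close>, \<open>STau i j = \<tau>_{i,j} : (i,j) \<rightarrow> (j,i)\<close>,
  and \<open>STauIncl i j = \<tau>_{i,j} \<circ> i^s_{i,j} : i \<rightarrow> (j,i)\<close>.\<close>
datatype 'i s2arr = SId "'i s2obj" | SIncl 'i 'i | STau 'i 'i | STauIncl 'i 'i

fun s2dom :: "'i s2arr \<Rightarrow> 'i s2obj" where
  "s2dom (SId x) = x"
| "s2dom (SIncl i j) = Sing i"
| "s2dom (STau i j) = Pr i j"
| "s2dom (STauIncl i j) = Sing i"

fun s2cod :: "'i s2arr \<Rightarrow> 'i s2obj" where
  "s2cod (SId x) = x"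
| "s2cod (SIncl i j) = Pr i j"
| "s2cod (STau i j) = Pr j i"
| "s2cod (STauIncl i j) = Pr j i"

text \<open>Composition \<open>s2comp g f = g \<circ> f\<close> (only meaningful when \<open>s2cod f = s2dom g\<close>).\<close>
fun s2comp :: "'i s2arr \<Rightarrow> 'i s2arr \<Rightarrow> 'i s2arr" where
  "s2comp g (SId x) = g"
| "s2comp (SId x) f = f"
| "s2comp (STau a b) (STau i j) = SId (Pr i j)"
| "s2comp (STau a b) (SIncl i j) = STauIncl i j"
| "s2comp (STau a b) (STauIncl i j) = SIncl i j"
| "s2comp g f = undefined"

definition S2 :: "'i set \<Rightarrow> ('i s2obj, 'i s2arr) cat" where
  "S2 I = \<lparr>Obj = {Sing i | i. i \<in> I} \<union> {Pr i j | i j. i \<in> I \<and> j \<in> I},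
           Arr = {SId (Sing i) | i. i \<in> I} \<union> {SId (Pr i j) | i j. i \<in> I \<and> j \<in> I}
                 \<union> {SIncl i j | i j. i \<in> I \<and> j \<in> I} \<union> {STau i j | i j. i \<in> I \<and> j \<in> I}
                 \<union> {STauIncl i j | i j. i \<in> I \<and> j \<in> I},
           Dom = s2dom, Cod = s2cod, Comp = s2comp, Ident = SId\<rparr>"

text \<open>Given, for all i j, a chosen pullback \<open>(P i j, p1 i j, p2 i j)\<close> of \<open>\<iota> i, \<iota> j\<close>
  (so \<open>P i j = U_i \<times>_U U_j\<close>, \<open>p1 i j = pr_1\<close>, \<open>p2 i j = pr_2\<close>).\<close>

fun DU_obj :: "('i \<Rightarrow> 'o) \<Rightarrow> ('i \<Rightarrow> 'i \<Rightarrow> 'o) \<Rightarrow> 'i s2obj \<Rightarrow> 'o" where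
  "DU_obj Ui P (Sing i) = Ui i"
| "DU_obj Ui P (Pr i j) = P i j"

definition pb_swap :: "('o, 'a) cat \<Rightarrow> ('i \<Rightarrow> 'i \<Rightarrow> 'o) \<Rightarrow> ('i \<Rightarrow> 'i \<Rightarrow> 'a) \<Rightarrow> ('i \<Rightarrow> 'i \<Rightarrow> 'a) \<Rightarrow> 'i \<Rightarrow> 'i \<Rightarrow> 'a" where
  "pb_swap C P p1 p2 i j = (THE h. h \<in> hom C (P j i) (P i j) \<and>
      Comp C (p1 i j) h = p2 j i \<and> Comp C (p2 i j) h = p1 j i)"

fun DU_arr :: "('o, 'a) cat \<Rightarrow> ('i \<Rightarrow> 'o) \<Rightarrow> ('i \<Rightarrow> 'i \<Rightarrow> 'o) \<Rightarrow> ('i \<Rightarrow> 'i \<Rightarrow> 'a) \<Rightarrow> ('i \<Rightarrow> 'i \<Rightarrow> 'a)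
               \<Rightarrow> 'i s2arr \<Rightarrow> 'a" where
  "DU_arr C Ui P p1 p2 (SId x) = Ident C (DU_obj Ui P x)"
| "DU_arr C Ui P p1 p2 (SIncl i j) = p1 i j"
| "DU_arr C Ui P p1 p2 (STau i j) = pb_swap C P p1 p2 i j"
| "DU_arr C Ui P p1 p2 (STauIncl i j) = Comp C (p1 i j) (pb_swap C P p1 p2 i j)"

end

theory Submission
  imports Defs
begin

lemma cat_comp_hom:
  assumes "category C" "f \<in> hom C x y" "g \<in> hom C y z"
  shows "Comp C g f \<in> hom C x z"
  using assms unfolding category_def hom_def by auto

lemma cat_assoc:
  assumes "category C" "f \<in> hom C x y" "g \<in> hom C y z" "h \<in> hom C z w"
  shows "Comp C h (Comp C g f) = Comp C (Comp C h g) f"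
  using assms unfolding category_def hom_def by auto

lemma cat_id_right:
  assumes "category C" "f \<in> hom C x y"
  shows "Comp C f (Ident C x) = f"
  using assms unfolding category_def hom_def by auto

lemma opS2_simps:
  "Obj (op_cat (S2 I)) = Obj (S2 I)"
  "Arr (op_cat (S2 I)) = Arr (S2 I)"
  "Dom (op_cat (S2 I)) = s2cod"
  "Cod (op_cat (S2 I)) = s2dom"
  "Comp (op_cat (S2 I)) g f = s2comp f g"
  "Ident (op_cat (S2 I)) = SId"
  by (simp_all add: op_cat_def S2_def)

lemma S2_Obj: "Obj (S2 I) = {Sing i | i. i \<in> I} \<union> {Pr i j | i j. i \<in> I \<and> j \<in> I}"
  by (simp add: S2_def)

lemma S2_Arr: "Arr (S2 I) = {SId (Sing i) | i. i \<in> I} \<union> {SId (Pr i j) | i j. i \<in> I \<and> j \<in> I}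
                 \<union> {SIncl i j | i j. i \<in> I \<and> j \<in> I} \<union> {STau i j | i j. i \<in> I \<and> j \<in> I}
                 \<union> {STauIncl i j | i j. i \<in> I \<and> j \<in> I}"
  by (simp add: S2_def)

theorem mainTheorem5:
  fixes C :: "('o, 'a) cat" and I :: "'i set"
    and U :: 'o and Ui :: "'i \<Rightarrow> 'o" and \<iota> :: "'i \<Rightarrow> 'a"
    and Go :: "'i s2obj \<Rightarrow> 'o" and Ga :: "'i s2arr \<Rightarrow> 'a" and lam :: "'i s2obj \<Rightarrow> 'a"
    and P :: "'i \<Rightarrow> 'i \<Rightarrow> 'o" and p1 p2 :: "'i \<Rightarrow> 'i \<Rightarrow> 'a"
  assumes cat: "category C"
    and pbs: "has_pullbacks C"
    and sink: "U \<in> Obj C" "\<forall>i\<in>I. \<iota> i \<in> hom C (Ui i) U"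
    and G: "is_functor (op_cat (S2 I)) C Go Ga"
    and G_sing: "\<forall>i\<in>I. Go (Sing i) = Ui i"
    and colim: "is_colimit_cocone (op_cat (S2 I)) C Go Ga U lam"
    and lam_sing: "\<forall>i\<in>I. lam (Sing i) = \<iota> i"
    and pb: "\<forall>i\<in>I. \<forall>j\<in>I. is_pullback C (\<iota> i) (\<iota> j) (P i j) (p1 i j) (p2 i j)"
  shows "is_colimit_cocone (op_cat (S2 I)) C (DU_obj Ui P) (DU_arr C Ui P p1 p2) U
           (\<lambda>x. case x of Sing i \<Rightarrow> \<iota> i | Pr i j \<Rightarrow> Comp C (\<iota> i) (p1 i j))"
proof -
  define leg where "leg = (\<lambda>x. case x of Sing i \<Rightarrow> \<iota> i | Pr i j \<Rightarrow> Comp C (\<iota> i) (p1 i j))"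
  define sw where "sw = pb_swap C P p1 p2"
  have io: "\<iota> i \<in> hom C (Ui i) U" if "i \<in> I" for i using sink that by auto
  have iodom: "Dom C (\<iota> i) = Ui i" if "i \<in> I" for i using io[OF that] by (simp add: hom_def)
  have pbf: "p1 i j \<in> hom C (P i j) (Ui i)" "p2 i j \<in> hom C (P i j) (Ui j)"
     "Comp C (\<iota> i) (p1 i j) = Comp C (\<iota> j) (p2 i j)"
     "\<And>Q a b. a \<in> hom C Q (Ui i) \<Longrightarrow> b \<in> hom C Q (Ui j) \<Longrightarrow> Comp C (\<iota> i) a = Comp C (\<iota> j) b \<Longrightarrow>
        (\<exists>!h. h \<in> hom C Q (P i j) \<and> Comp C (p1 i j) h = a \<and> Comp C (p2 i j) h = b)"
    if "i \<in> I" "j \<in> I" for i j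
  proof -
    have "is_pullback C (\<iota> i) (\<iota> j) (P i j) (p1 i j) (p2 i j)" using pb that by blast
    then show "p1 i j \<in> hom C (P i j) (Ui i)" "p2 i j \<in> hom C (P i j) (Ui j)"
     "Comp C (\<iota> i) (p1 i j) = Comp C (\<iota> j) (p2 i j)"
     "\<And>Q a b. a \<in> hom C Q (Ui i) \<Longrightarrow> b \<in> hom C Q (Ui j) \<Longrightarrow> Comp C (\<iota> i) a = Comp C (\<iota> j) b \<Longrightarrow>
        (\<exists>!h. h \<in> hom C Q (P i j) \<and> Comp C (p1 i j) h = a \<and> Comp C (p2 i j) h = b)"
      unfolding is_pullback_def iodom[OF that(1)] iodom[OF that(2)] by blast+
  qed
  have swp: "sw i j \<in> hom C (P j i) (P i j) \<and> Comp C (p1 i j) (sw i j) = p2 j i \<and> Comp C (p2 i j) (sw i j) = p1 j i"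
    if "i \<in> I" "j \<in> I" for i j
  proof -
    have "\<exists>!h. h \<in> hom C (P j i) (P i j) \<and> Comp C (p1 i j) h = p2 j i \<and> Comp C (p2 i j) h = p1 j i"
      using pbf(4)[OF that, of "p2 j i" "P j i" "p1 j i"] pbf(1,2,3)[OF that(2) that(1)] by auto
    then show ?thesis unfolding sw_def pb_swap_def by (rule theI')
  qed
  have legPr: "leg (Pr i j) \<in> hom C (P i j) U" if "i \<in> I" "j \<in> I" for i j
    using cat_comp_hom[OF cat pbf(1)[OF that] io[OF that(1)]] by (simp add: leg_def)
  have legswap: "Comp C (Comp C (\<iota> i) (p1 i j)) (sw i j) = Comp C (\<iota> j) (p1 j i)"
    if "i \<in> I" "j \<in> I" for i j
  proof -
    have "Comp C (Comp C (\<iota> i) (p1 i j)) (sw i j) = Comp C (\<iota> i) (Comp C (p1 i j) (sw i j))"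
      using cat_assoc[OF cat conjunct1[OF swp[OF that]] pbf(1)[OF that] io[OF that(1)]] by (rule sym)
    also have "\<dots> = Comp C (\<iota> i) (p2 j i)" using swp[OF that] by simp
    also have "\<dots> = Comp C (\<iota> j) (p1 j i)" using pbf(3)[OF that(2) that(1)] by simp
    finally show ?thesis .
  qed
  have cocone: "is_cocone (op_cat (S2 I)) C (DU_obj Ui P) (DU_arr C Ui P p1 p2) U leg"
    unfolding is_cocone_def
  proof (intro conjI ballI)
    show "U \<in> Obj C" using sink by simp
  next
    fix x assume "x \<in> Obj (op_cat (S2 I))"
    then show "leg x \<in> hom C (DU_obj Ui P x) U"
      using io legPr by (auto simp: opS2_simps S2_Obj leg_def)
  next
    fix f assume "f \<in> Arr (op_cat (S2 I))"
    then consider (a) i where "i \<in> I" "f = SId (Sing i)"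
      | (b) i j where "i \<in> I" "j \<in> I" "f = SId (Pr i j)"
      | (c) i j where "i \<in> I" "j \<in> I" "f = SIncl i j"
      | (d) i j where "i \<in> I" "j \<in> I" "f = STau i j"
      | (e) i j where "i \<in> I" "j \<in> I" "f = STauIncl i j"
      by (auto simp: opS2_simps S2_Arr)
    then show "Comp C (leg (Cod (op_cat (S2 I)) f)) (DU_arr C Ui P p1 p2 f) = leg (Dom (op_cat (S2 I)) f)"
    proof cases
      case a then show ?thesis using cat_id_right[OF cat io[OF a(1)]] by (simp add: opS2_simps leg_def)
    next
      case b then show ?thesis using cat_id_right[OF cat legPr[OF b(1,2)]] by (simp add: opS2_simps leg_def)
    next
      case c then show ?thesis by (simp add: opS2_simps leg_def)
    next
      case d then show ?thesis using legswap[OF d(1,2)] by (simp add: opS2_simps leg_def sw_def)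
    next
      case e then show ?thesis using legswap[OF e(1,2)]
          cat_assoc[OF cat conjunct1[OF swp[OF e(1,2)]] pbf(1)[OF e(1,2)] io[OF e(1)]] swp[OF e(1,2)]
        by (simp add: opS2_simps leg_def sw_def)
    qed
  qed
  have Gf: "\<forall>f\<in>Arr (op_cat (S2 I)). Ga f \<in> hom C (Go (s2cod f)) (Go (s2dom f))"
    "\<forall>x\<in>Obj (op_cat (S2 I)). Ga (SId x) = Ident C (Go x)"
    "\<forall>f\<in>Arr (op_cat (S2 I)). \<forall>g\<in>Arr (op_cat (S2 I)). s2dom f = s2cod g \<longrightarrow> Ga (s2comp f g) = Comp C (Ga g) (Ga f)"
    using G unfolding is_functor_def by (simp_all add: opS2_simps)
  have lamc: "\<forall>x\<in>Obj (op_cat (S2 I)). lam x \<in> hom C (Go x) U"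
    "\<forall>f\<in>Arr (op_cat (S2 I)). Comp C (lam (s2dom f)) (Ga f) = lam (s2cod f)"
    using colim unfolding is_colimit_cocone_def is_cocone_def by (simp_all add: opS2_simps)
  have lamu: "\<forall>L' mu. is_cocone (op_cat (S2 I)) C Go Ga L' mu \<longrightarrow>
        (\<exists>!u. u \<in> hom C U L' \<and> (\<forall>x\<in>Obj (op_cat (S2 I)). Comp C u (lam x) = mu x))"
    using colim unfolding is_colimit_cocone_def by simp
  have inObj: "Sing i \<in> Obj (op_cat (S2 I))" "Pr i j \<in> Obj (op_cat (S2 I))" if "i \<in> I" "j \<in> I" for i j
    using that by (auto simp: opS2_simps S2_Obj)
  have inArr: "SIncl i j \<in> Arr (op_cat (S2 I))" "STau i j \<in> Arr (op_cat (S2 I))"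
     "STauIncl i j \<in> Arr (op_cat (S2 I))" "SId (Sing i) \<in> Arr (op_cat (S2 I))" "SId (Pr i j) \<in> Arr (op_cat (S2 I))"
    if "i \<in> I" "j \<in> I" for i j
    using that by (auto simp: opS2_simps S2_Arr)
  have GI: "Ga (SIncl i j) \<in> hom C (Go (Pr i j)) (Ui i)" if "i \<in> I" "j \<in> I" for i j
    using Gf(1) inArr(1)[OF that] G_sing that by auto
  have GTI: "Ga (STauIncl i j) \<in> hom C (Go (Pr j i)) (Ui i)" if "i \<in> I" "j \<in> I" for i j
    using Gf(1) inArr(3)[OF that] G_sing that by auto
  have GT: "Ga (STau i j) \<in> hom C (Go (Pr j i)) (Go (Pr i j))" if "i \<in> I" "j \<in> I" for i j
    using Gf(1) inArr(2)[OF that] by auto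
  have GTIc: "Ga (STauIncl i j) = Comp C (Ga (SIncl i j)) (Ga (STau i j))" if "i \<in> I" "j \<in> I" for i j
    using Gf(3) inArr(1,2)[OF that] by force
  have lamI: "Comp C (\<iota> i) (Ga (SIncl i j)) = lam (Pr i j)" if "i \<in> I" "j \<in> I" for i j
    using lamc(2) inArr(1)[OF that] lam_sing that by force
  have lamTI: "Comp C (\<iota> i) (Ga (STauIncl i j)) = lam (Pr j i)" if "i \<in> I" "j \<in> I" for i j
    using lamc(2) inArr(3)[OF that] lam_sing that by force
  show ?thesis
    unfolding is_colimit_cocone_def leg_def[symmetric]
  proof (intro conjI allI impI cocone)
    fix L' mu assume mc: "is_cocone (op_cat (S2 I)) C (DU_obj Ui P) (DU_arr C Ui P p1 p2) L' mu"
    have L': "L' \<in> Obj C" using mc unfolding is_cocone_def by simp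
    have muS: "mu (Sing i) \<in> hom C (Ui i) L'" if "i \<in> I" for i
      using mc inObj[OF that that] unfolding is_cocone_def by force
    have muI: "Comp C (mu (Sing i)) (p1 i j) = mu (Pr i j)" if "i \<in> I" "j \<in> I" for i j
      using mc inArr(1)[OF that] unfolding is_cocone_def by (force simp: opS2_simps)
    have muT: "Comp C (mu (Pr i j)) (sw i j) = mu (Pr j i)" if "i \<in> I" "j \<in> I" for i j
      using mc inArr(2)[OF that] unfolding is_cocone_def by (force simp: opS2_simps sw_def)
    have compat: "Comp C (mu (Sing i)) (p2 j i) = Comp C (mu (Sing j)) (p1 j i)" if "i \<in> I" "j \<in> I" for i j
    proof -
      have "Comp C (mu (Sing i)) (p2 j i) = Comp C (mu (Sing i)) (Comp C (p1 i j) (sw i j))"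
        using swp[OF that] by simp
      also have "\<dots> = Comp C (Comp C (mu (Sing i)) (p1 i j)) (sw i j)"
        using cat_assoc[OF cat conjunct1[OF swp[OF that]] pbf(1)[OF that] muS[OF that(1)]] .
      also have "\<dots> = mu (Pr j i)" using muI[OF that] muT[OF that] by simp
      also have "\<dots> = Comp C (mu (Sing j)) (p1 j i)" using muI[OF that(2,1)] by simp
      finally show ?thesis .
    qed
    have key: "Comp C (mu (Sing i)) (Ga (STauIncl i j)) = Comp C (mu (Sing j)) (Ga (SIncl j i))"
      if ij: "i \<in> I" "j \<in> I" for i j
    proof -
      have "Comp C (\<iota> j) (Ga (SIncl j i)) = Comp C (\<iota> i) (Ga (STauIncl i j))"
        using lamI[OF ij(2,1)] lamTI[OF ij] by simp
      then obtain h where h: "h \<in> hom C (Go (Pr j i)) (P j i)" "Comp C (p1 j i) h = Ga (SIncl j i)"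
          "Comp C (p2 j i) h = Ga (STauIncl i j)"
        using pbf(4)[OF ij(2,1) GI[OF ij(2,1)] GTI[OF ij]] by blast
      have "Comp C (mu (Sing i)) (Ga (STauIncl i j)) = Comp C (mu (Sing i)) (Comp C (p2 j i) h)"
        using h by simp
      also have "\<dots> = Comp C (Comp C (mu (Sing i)) (p2 j i)) h"
        using cat_assoc[OF cat h(1) pbf(2)[OF ij(2,1)] muS[OF ij(1)]] .
      also have "\<dots> = Comp C (Comp C (mu (Sing j)) (p1 j i)) h" using compat[OF ij] by simp
      also have "\<dots> = Comp C (mu (Sing j)) (Comp C (p1 j i) h)"
        using cat_assoc[OF cat h(1) pbf(1)[OF ij(2,1)] muS[OF ij(2)]] by simp
      also have "\<dots> = Comp C (mu (Sing j)) (Ga (SIncl j i))" using h by simp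
      finally show ?thesis .
    qed
    define nu where "nu = (\<lambda>x. case x of Sing i \<Rightarrow> mu (Sing i) | Pr i j \<Rightarrow> Comp C (mu (Sing i)) (Ga (SIncl i j)))"
    have nuPr: "nu (Pr i j) \<in> hom C (Go (Pr i j)) L'" if "i \<in> I" "j \<in> I" for i j
      using cat_comp_hom[OF cat GI[OF that] muS[OF that(1)]] by (simp add: nu_def)
    have nuc: "is_cocone (op_cat (S2 I)) C Go Ga L' nu"
      unfolding is_cocone_def
    proof (intro conjI ballI)
      show "L' \<in> Obj C" by (rule L')
    next
      fix x assume "x \<in> Obj (op_cat (S2 I))"
      then show "nu x \<in> hom C (Go x) L'"
        using muS nuPr G_sing by (auto simp: opS2_simps S2_Obj nu_def)
    next
      fix f assume "f \<in> Arr (op_cat (S2 I))"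
      then consider (a) i where "i \<in> I" "f = SId (Sing i)"
        | (b) i j where "i \<in> I" "j \<in> I" "f = SId (Pr i j)"
        | (c) i j where "i \<in> I" "j \<in> I" "f = SIncl i j"
        | (d) i j where "i \<in> I" "j \<in> I" "f = STau i j"
        | (e) i j where "i \<in> I" "j \<in> I" "f = STauIncl i j"
        by (auto simp: opS2_simps S2_Arr)
      then show "Comp C (nu (Cod (op_cat (S2 I)) f)) (Ga f) = nu (Dom (op_cat (S2 I)) f)"
      proof cases
        case a then show ?thesis using cat_id_right[OF cat muS[OF a(1)]] Gf(2) inObj[OF a(1) a(1)] G_sing
          by (simp add: opS2_simps nu_def)
      next
        case b then show ?thesis using cat_id_right[OF cat nuPr[OF b(1,2)]] Gf(2) inObj[OF b(1,2)]
          by (simp add: opS2_simps)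
      next
        case c then show ?thesis by (simp add: opS2_simps nu_def)
      next
        case d
        have "Comp C (nu (Pr i j)) (Ga (STau i j)) = Comp C (mu (Sing i)) (Comp C (Ga (SIncl i j)) (Ga (STau i j)))"
          using cat_assoc[OF cat GT[OF d(1,2)] GI[OF d(1,2)] muS[OF d(1)]] by (simp add: nu_def)
        also have "\<dots> = nu (Pr j i)" using GTIc[OF d(1,2)] key[OF d(1,2)] by (simp add: nu_def)
        finally show ?thesis using d by (simp add: opS2_simps)
      next
        case e then show ?thesis using key[OF e(1,2)] by (simp add: opS2_simps nu_def)
      qed
    qed
    from lamu nuc obtain u where u: "u \<in> hom C U L'" "\<forall>x\<in>Obj (op_cat (S2 I)). Comp C u (lam x) = nu x"
      and uuniq: "\<And>v. v \<in> hom C U L' \<Longrightarrow> (\<forall>x\<in>Obj (op_cat (S2 I)). Comp C v (lam x) = nu x) \<Longrightarrow> v = u"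
      by metis
    have equiv: "(\<forall>x\<in>Obj (op_cat (S2 I)). Comp C v (leg x) = mu x) \<longleftrightarrow>
                 (\<forall>x\<in>Obj (op_cat (S2 I)). Comp C v (lam x) = nu x)" if v: "v \<in> hom C U L'" for v
    proof
      assume A: "\<forall>x\<in>Obj (op_cat (S2 I)). Comp C v (leg x) = mu x"
      have s: "Comp C v (\<iota> i) = mu (Sing i)" if "i \<in> I" for i
        using A inObj[OF that that] by (auto simp: leg_def)
      show "\<forall>x\<in>Obj (op_cat (S2 I)). Comp C v (lam x) = nu x"
      proof
        fix x assume "x \<in> Obj (op_cat (S2 I))"
        then consider (a) i where "i \<in> I" "x = Sing i" | (b) i j where "i \<in> I" "j \<in> I" "x = Pr i j"
          by (auto simp: opS2_simps S2_Obj)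
        then show "Comp C v (lam x) = nu x"
        proof cases
          case a then show ?thesis using s lam_sing by (simp add: nu_def)
        next
          case b
          have "Comp C v (lam (Pr i j)) = Comp C v (Comp C (\<iota> i) (Ga (SIncl i j)))" using lamI[OF b(1,2)] by simp
          also have "\<dots> = nu (Pr i j)"
            using cat_assoc[OF cat GI[OF b(1,2)] io[OF b(1)] v] s[OF b(1)] by (simp add: nu_def)
          finally show ?thesis using b by simp
        qed
      qed
    next
      assume A: "\<forall>x\<in>Obj (op_cat (S2 I)). Comp C v (lam x) = nu x"
      have s: "Comp C v (\<iota> i) = mu (Sing i)" if "i \<in> I" for i
        using A inObj[OF that that] lam_sing that by (auto simp: nu_def)
      show "\<forall>x\<in>Obj (op_cat (S2 I)). Comp C v (leg x) = mu x"
      proof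
        fix x assume "x \<in> Obj (op_cat (S2 I))"
        then consider (a) i where "i \<in> I" "x = Sing i" | (b) i j where "i \<in> I" "j \<in> I" "x = Pr i j"
          by (auto simp: opS2_simps S2_Obj)
        then show "Comp C v (leg x) = mu x"
        proof cases
          case a then show ?thesis using s by (simp add: leg_def)
        next
          case b
          have "Comp C v (leg (Pr i j)) = Comp C v (Comp C (\<iota> i) (p1 i j))" by (simp add: leg_def)
          also have "\<dots> = mu (Pr i j)"
            using cat_assoc[OF cat pbf(1)[OF b(1,2)] io[OF b(1)] v] s[OF b(1)] muI[OF b(1,2)] by simp
          finally show ?thesis using b by simp
        qed
      qed
    qed
    show "\<exists>!u. u \<in> hom C U L' \<and> (\<forall>x\<in>Obj (op_cat (S2 I)). Comp C u (leg x) = mu x)"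
    proof (rule ex1I[of _ u])
      show "u \<in> hom C U L' \<and> (\<forall>x\<in>Obj (op_cat (S2 I)). Comp C u (leg x) = mu x)"
        using u equiv[OF u(1)] by blast
    next
      fix v assume "v \<in> hom C U L' \<and> (\<forall>x\<in>Obj (op_cat (S2 I)). Comp C v (leg x) = mu x)"
      then show "v = u" using uuniq equiv by blast
    qed
  qed
qed

end
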